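(* Let $n$ and $s$ be sufficiently large, $k\in\mathbb N$ and $0<\varepsilon<1$. Suppose $G$ is an $n$-vertex $(\varepsilon,s)$-expander and $\frac{\varepsilon s}{k}\ge 10^5(\log n)^3$. Then there are pairwise edge-disjoint graphs $G_1,\dots,G_k$ with $E(G)=\bigcup_{i\in[k]}E(G_i)$ such that each $G_i$ has vertex set $V(G)$ and is an $\left(\frac{\varepsilon}{4},\frac{\varepsilon s}{10^4k(\log n)^2}\right)$-expander.
   Context: Logarithms are base 2. For $U\subseteq V(G)$, $N_G(U)$ is the set of vertices outside $U$ with a neighbour in $U$; $G-F$ is $G$ with edge set $F$ deleted. An $n$-vertex graph $G$ is an $(\varepsilon,s)$-expander if for every $U\subseteq V(G)$, $F\subseteq E(G)$ with $1\le|U|\le\frac23n$ and $|F|\le s|U|$ we have $|N_{G-F}(U)|\ge\varepsilon|U|/(\log n)^2$. *)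

theory Defs
  imports Main "HOL-Library.Disjoint_Sets" Complex_Main
begin

definition graph :: "'a set \<Rightarrow> 'a set set \<Rightarrow> bool" where
  "graph V E \<longleftrightarrow> finite V \<and> (\<forall>e\<in>E. e \<subseteq> V \<and> card e = 2)"

definition nbhd :: "'a set \<Rightarrow> 'a set set \<Rightarrow> 'a set \<Rightarrow> 'a set" where
  "nbhd V E U = {v \<in> V - U. \<exists>u\<in>U. {u, v} \<in> E}"

definition expander :: "'a set \<Rightarrow> 'a set set \<Rightarrow> real \<Rightarrow> real \<Rightarrow> bool" where
  "expander V E eps s \<longleftrightarrow>
     (\<forall>U F. U \<subseteq> V \<longrightarrow> F \<subseteq> E \<longrightarrow> 1 \<le> card U \<longrightarrow>
        real (card U) \<le> 2/3 * real (card V) \<longrightarrow> real (card F) \<le> s * real (card U) \<longrightarrow>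
        real (card (nbhd V (E - F) U)) \<ge> eps * real (card U) / (log 2 (real (card V)))\<^sup>2)"

end

theory Submission
  imports Defs "HOL-Library.FuncSet"
begin


lemma sum_pow_card:
  fixes x :: real
  assumes "finite V"
  shows "(\<Sum>U\<in>Pow V. x ^ card U) = (1 + x) ^ card V"
proof -
  have "(\<Prod>v\<in>V. x + 1) = (\<Sum>X\<in>Pow V. (\<Prod>v\<in>X. x) * (\<Prod>v\<in>V-X. 1))"
    by (rule prod_add[OF assms])
  thus ?thesis by (simp add: add.commute)
qed

lemma card_small_subsets:
  assumes "finite T" "card T > 0"
  shows "card {A. A \<subseteq> T \<and> card A \<le> t} \<le> (t+1) * card T ^ t"
proof -
  have eq: "{A. A \<subseteq> T \<and> card A \<le> t} = (\<Union>j\<in>{..t}. {A. A \<subseteq> T \<and> card A = j})" by auto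
  have "card {A. A \<subseteq> T \<and> card A \<le> t} \<le> (\<Sum>j\<in>{..t}. card {A. A \<subseteq> T \<and> card A = j})"
    unfolding eq by (rule card_UN_le) simp
  also have "\<dots> = (\<Sum>j\<in>{..t}. card T choose j)" using n_subsets[OF assms(1)] by simp
  also have "\<dots> \<le> (\<Sum>j\<in>{..t}. card T ^ t)"
  proof (rule sum_mono)
    fix j assume j: "j \<in> {..t}"
    show "card T choose j \<le> card T ^ t"
    proof (cases "j \<le> card T")
      case True
      then have "card T choose j \<le> card T ^ j" by (rule binomial_le_pow)
      also have "\<dots> \<le> card T ^ t" using assms(2) j by (intro power_increasing) auto
      finally show ?thesis .
    next
      case False
      then show ?thesis by (simp add: binomial_eq_0)
    qed
  qed
  also have "\<dots> = (t+1) * card T ^ t" by simp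
  finally show ?thesis .
qed

lemma card_piece:
  fixes k :: nat
  assumes "finite E" "S \<subseteq> E" "i \<in> {1..k}"
  shows "real (card (PiE E (\<lambda>e. if e \<in> S then {1..k} - {i} else {1..k})))
           = (1 - 1/real k) ^ card S * real k ^ card E"
proof -
  have k: "k \<ge> 1" using assms(3) by auto
  have "card (PiE E (\<lambda>e. if e \<in> S then {1..k} - {i} else {1..k}))
     = (\<Prod>e\<in>E. card (if e \<in> S then {1..k} - {i} else {1..k}))"
    by (rule card_PiE[OF assms(1)])
  also have "\<dots> = (\<Prod>e\<in>E. if e \<in> S then k - 1 else k)"
    using assms(3) by (intro prod.cong) auto
  also have "\<dots> = (\<Prod>e\<in>E \<inter> {e. e \<in> S}. k - 1) * (\<Prod>e\<in>E \<inter> - {e. e \<in> S}. k)"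
    by (rule prod.If_cases[OF assms(1)])
  also have "\<dots> = (k - 1) ^ card S * k ^ card (E - S)"
  proof -
    have "E \<inter> {e. e \<in> S} = S" using assms(2) by auto
    moreover have "E \<inter> - {e. e \<in> S} = E - S" by auto
    ultimately show ?thesis by simp
  qed
  finally have 1: "real (card (PiE E (\<lambda>e. if e \<in> S then {1..k} - {i} else {1..k})))
       = (real k - 1) ^ card S * real k ^ card (E - S)" using k by (simp add: of_nat_diff)
  have cE: "card E = card S + card (E - S)"
    using assms(1,2) by (metis card_Diff_subset finite_subset le_add_diff_inverse card_mono)
  have "(1 - 1/real k) ^ card S * real k ^ card E
      = ((1 - 1/real k) * real k) ^ card S * real k ^ card (E - S)"
    by (simp add: cE power_add power_mult_distrib)
  also have "(1 - 1/real k) * real k = real k - 1" using k by (simp add: field_simps)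
  finally show ?thesis using 1 by simp
qed

lemma count_bad:
  fixes k :: nat and a :: real
  assumes "finite E" "T \<subseteq> E" "i \<in> {1..k}" "0 \<le> a" "real (card T) > a"
  shows "real (card {c \<in> PiE E (\<lambda>_. {1..k}). real (card {e\<in>T. c e = i}) \<le> a})
     \<le> (real (nat \<lfloor>a\<rfloor>) + 1) * real (card T) ^ nat \<lfloor>a\<rfloor> * (1 - 1/real k) ^ (card T - nat \<lfloor>a\<rfloor>) * real k ^ card E"
proof -
  define t where "t = nat \<lfloor>a\<rfloor>"
  define m where "m = card T"
  have finT: "finite T" using assms(1,2) finite_subset by auto
  have ta: "real t \<le> a" unfolding t_def using assms(4) by linarith
  have tm: "t < m" using ta assms(5) unfolding m_def by linarith
  have k: "k \<ge> 1" using assms(3) by auto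
  define \<A> where "\<A> = {A. A \<subseteq> T \<and> card A \<le> t}"
  define P where "P A = PiE E (\<lambda>e. if e \<in> T - A then {1..k} - {i} else {1..k})" for A
  have sub: "{c \<in> PiE E (\<lambda>_. {1..k}). real (card {e\<in>T. c e = i}) \<le> a} \<subseteq> (\<Union>A\<in>\<A>. P A)"
  proof
    fix c assume c: "c \<in> {c \<in> PiE E (\<lambda>_. {1..k}). real (card {e\<in>T. c e = i}) \<le> a}"
    define A where "A = {e\<in>T. c e = i}"
    have "card A \<le> t" using c unfolding A_def t_def by (simp add: le_nat_floor)
    then have "A \<in> \<A>" unfolding \<A>_def A_def by auto
    moreover have "c \<in> P A" using c unfolding P_def A_def by (auto simp: PiE_iff)
    ultimately show "c \<in> (\<Union>A\<in>\<A>. P A)" by auto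
  qed
  have finA: "finite \<A>" unfolding \<A>_def using finT by simp
  have bound: "real (card (P A)) \<le> (1 - 1/real k) ^ (m - t) * real k ^ card E" if "A \<in> \<A>" for A
  proof -
    have AT: "A \<subseteq> T" "card A \<le> t" using that unfolding \<A>_def by auto
    have "real (card (P A)) = (1 - 1/real k) ^ card (T - A) * real k ^ card E"
      unfolding P_def by (rule card_piece[OF assms(1) _ assms(3)]) (use assms(2) in auto)
    also have "card (T - A) = m - card A" unfolding m_def using AT finT
      by (simp add: card_Diff_subset finite_subset)
    also have "(1 - 1/real k) ^ (m - card A) \<le> (1 - 1/real k) ^ (m - t)"
      using k AT by (intro power_decreasing) (auto simp: field_simps)
    finally show ?thesis by (simp add: mult_right_mono)
  qed
  have "real (card {c \<in> PiE E (\<lambda>_. {1..k}). real (card {e\<in>T. c e = i}) \<le> a})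
      \<le> real (card (\<Union>A\<in>\<A>. P A))"
    using sub finA by (intro of_nat_mono card_mono) (auto simp: P_def assms(1) intro!: finite_PiE)
  also have "\<dots> \<le> real (\<Sum>A\<in>\<A>. card (P A))" by (intro of_nat_mono card_UN_le finA)
  also have "\<dots> = (\<Sum>A\<in>\<A>. real (card (P A)))" by simp
  also have "\<dots> \<le> (\<Sum>A\<in>\<A>. (1 - 1/real k) ^ (m - t) * real k ^ card E)"
    by (intro sum_mono bound)
  also have "\<dots> = real (card \<A>) * ((1 - 1/real k) ^ (m - t) * real k ^ card E)" by simp
  also have "\<dots> \<le> real ((t+1) * m ^ t) * ((1 - 1/real k) ^ (m - t) * real k ^ card E)"
  proof (rule mult_right_mono)
    show "real (card \<A>) \<le> real ((t+1) * m ^ t)"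
      unfolding \<A>_def m_def by (intro of_nat_mono card_small_subsets finT) (use tm m_def in auto)
    show "0 \<le> (1 - 1/real k) ^ (m - t) * real k ^ card E" using k by (auto simp: field_simps)
  qed
  finally show ?thesis unfolding t_def m_def by (simp add: mult.assoc distrib_right)
qed

lemma event_bound:
  fixes a b M :: real and k t m :: nat
  assumes "real t \<le> a" "t < m" "real m \<le> M" "b \<le> real m" "k \<ge> 1"
  shows "(real t + 1) * real m ^ t * (1 - 1/real k) ^ (m - t) \<le> exp (a + a * ln M - (b - a)/real k)"
proof -
  have M0: "M > 0" using assms(2,3) by linarith
  have lnM: "ln M \<ge> 0" using assms(2,3) by simp
  have 1: "real t + 1 \<le> exp (real t)" using exp_ge_add_one_self[of "real t"] by (simp add: add.commute)
  have "real m ^ t \<le> M ^ t" using assms(3) by (intro power_mono) auto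
  also have "M ^ t = exp (real t * ln M)" using M0 by (simp add: exp_of_nat_mult)
  finally have 2: "real m ^ t \<le> exp (real t * ln M)" .
  have q: "1 - 1/real k \<le> exp (- (1/real k))" using exp_ge_add_one_self[of "- (1/real k)"] by simp
  have q0: "0 \<le> 1 - 1/real k" using assms(5) by (simp add: field_simps)
  have "(1 - 1/real k) ^ (m - t) \<le> exp (- (1/real k)) ^ (m - t)" using q q0 by (intro power_mono)
  also have "\<dots> = exp (- (real (m - t) / real k))" by (simp add: exp_of_nat_mult[symmetric])
  finally have 3: "(1 - 1/real k) ^ (m - t) \<le> exp (- (real (m - t) / real k))" .
  have "(real t + 1) * real m ^ t * (1 - 1/real k) ^ (m - t)
      \<le> exp (real t) * exp (real t * ln M) * exp (- (real (m - t) / real k))"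
    using 1 2 3 q0 by (intro mult_mono) auto
  also have "\<dots> = exp (real t + real t * ln M - real (m - t) / real k)"
    by (simp add: exp_add[symmetric] exp_diff)
  also have "\<dots> \<le> exp (a + a * ln M - (b - a)/real k)"
  proof -
    have "real t * ln M \<le> a * ln M" using assms(1) lnM by (intro mult_right_mono)
    moreover have "(b - a)/real k \<le> real (m - t) / real k"
      using assms(1,2,4,5) by (intro divide_right_mono) (auto simp: of_nat_diff)
    ultimately show ?thesis using assms(1) by simp
  qed
  finally show ?thesis .
qed

definition cross :: "'a set \<Rightarrow> 'a set set \<Rightarrow> 'a set \<Rightarrow> 'a set \<Rightarrow> 'a set set" where
  "cross V E U W = {e\<in>E. \<exists>u\<in>U. \<exists>v\<in>V - U - W. e = {u, v}}"

lemma expander_cross: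
  assumes "graph V E" "expander V E eps s" "U \<subseteq> V" "1 \<le> card U"
    "real (card U) \<le> 2/3 * real (card V)" "W \<subseteq> V"
    "real (card W) < eps * real (card U) / (log 2 (real (card V)))\<^sup>2"
  shows "real (card (cross V E U W)) > s * real (card U)"
proof (rule ccontr)
  assume "\<not> ?thesis"
  then have F: "real (card (cross V E U W)) \<le> s * real (card U)" by simp
  have "cross V E U W \<subseteq> E" unfolding cross_def by auto
  then have 1: "real (card (nbhd V (E - cross V E U W) U)) \<ge> eps * real (card U) / (log 2 (real (card V)))\<^sup>2"
    using assms(2,3,4,5) F unfolding expander_def by blast
  have "nbhd V (E - cross V E U W) U \<subseteq> W"
    unfolding nbhd_def cross_def by blast
  moreover have "finite W" using assms(1,6) unfolding graph_def using finite_subset by auto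
  ultimately have "card (nbhd V (E - cross V E U W) U) \<le> card W" by (rule card_mono[rotated])
  then show False using 1 assms(7) by linarith
qed

lemma color_expander:
  assumes "graph V E" "Es = {e\<in>E. c e = i}"
    and H: "\<And>U W. U \<subseteq> V \<Longrightarrow> 1 \<le> card U \<Longrightarrow> real (card U) \<le> 2/3 * real (card V) \<Longrightarrow>
      W \<subseteq> V - U \<Longrightarrow> real (card W) < eps' * real (card U) / (log 2 (real (card V)))\<^sup>2 \<Longrightarrow>
      real (card {e \<in> cross V E U W. c e = i}) > s' * real (card U)"
  shows "expander V Es eps' s'"
  unfolding expander_def
proof (intro allI impI)
  fix U F
  assume U: "U \<subseteq> V" and FE: "F \<subseteq> Es" and U1: "1 \<le> card U"
    and U2: "real (card U) \<le> 2/3 * real (card V)" and Fs: "real (card F) \<le> s' * real (card U)"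
  show "eps' * real (card U) / (log 2 (real (card V)))\<^sup>2 \<le> real (card (nbhd V (Es - F) U))"
  proof (rule ccontr)
    assume "\<not> ?thesis"
    then have W: "real (card (nbhd V (Es - F) U)) < eps' * real (card U) / (log 2 (real (card V)))\<^sup>2" by simp
    define W where "W = nbhd V (Es - F) U"
    have WV: "W \<subseteq> V - U" unfolding W_def nbhd_def by auto
    have "{e \<in> cross V E U W. c e = i} \<subseteq> F"
    proof
      fix e assume e: "e \<in> {e \<in> cross V E U W. c e = i}"
      then obtain u v where uv: "u \<in> U" "v \<in> V - U - W" "e = {u, v}" "e \<in> E"
        unfolding cross_def by auto
      show "e \<in> F"
      proof (rule ccontr)
        assume "e \<notin> F"
        then have "e \<in> Es - F" using e uv assms(2) by auto
        then have "v \<in> W" unfolding W_def nbhd_def using uv by auto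
        then show False using uv by auto
      qed
    qed
    moreover have "finite F"
    proof -
      have "finite E" using assms(1) unfolding graph_def
        by (metis finite_Pow_iff finite_subset subsetI PowI)
      then show ?thesis using FE assms(2) by (metis (no_types, lifting) finite_subset mem_Collect_eq subsetI)
    qed
    ultimately have "card {e \<in> cross V E U W. c e = i} \<le> card F" by (rule card_mono[rotated])
    then show False using H[OF U U1 U2 WV] W Fs unfolding W_def by linarith
  qed
qed

lemma s_lt_n:
  assumes "graph V E" "expander V E eps s" "eps > 0" "card V \<ge> 2" "log 2 (real (card V)) > 0"
  shows "s < real (card V) - 1"
proof -
  have finV: "finite V" using assms(1) unfolding graph_def by auto
  obtain v where v: "v \<in> V" using assms(4) by fastforce
  define F where "F = {e\<in>E. v \<in> e}"
  have "F \<subseteq> (\<lambda>w. {v, w}) ` (V - {v})"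
  proof
    fix e assume "e \<in> F"
    then have e: "e \<in> E" "v \<in> e" unfolding F_def by auto
    then have "e \<subseteq> V" "card e = 2" using assms(1) unfolding graph_def by auto
    then obtain x y where xy: "e = {x, y}" "x \<noteq> y" by (meson card_2_iff)
    show "e \<in> (\<lambda>w. {v, w}) ` (V - {v})"
    proof (cases "x = v")
      case True
      then show ?thesis using xy \<open>e \<subseteq> V\<close> by auto
    next
      case False
      then have "y = v" using e xy by auto
      then show ?thesis using xy \<open>e \<subseteq> V\<close> by (auto simp: insert_commute)
    qed
  qed
  then have "card F \<le> card ((\<lambda>w. {v, w}) ` (V - {v}))" by (rule card_mono[rotated]) (use finV in simp)
  also have "\<dots> \<le> card (V - {v})" by (rule card_image_le) (use finV in simp)
  also have "\<dots> = card V - 1" using v finV by simp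
  finally have cF: "card F \<le> card V - 1" .
  have "\<not> real (card F) \<le> s * real (card {v})"
  proof
    assume Fs: "real (card F) \<le> s * real (card {v})"
    have "F \<subseteq> E" unfolding F_def by auto
    then have "real (card (nbhd V (E - F) {v})) \<ge> eps * real (card {v}) / (log 2 (real (card V)))\<^sup>2"
      using assms(2) v Fs assms(4) unfolding expander_def by (auto)
    moreover have "nbhd V (E - F) {v} = {}" unfolding nbhd_def F_def by auto
    ultimately show False using assms(3,5) by (simp add: divide_le_0_iff)
  qed
  then have "s < real (card F)" by simp
  with cF show ?thesis using assms(4) by (simp add: of_nat_diff)
qed

lemma graph_card_E:
  assumes "graph V E"
  shows "finite E" "card E \<le> card V ^ 2"
proof -
  have finV: "finite V" using assms unfolding graph_def by auto
  have sub: "E \<subseteq> {B. B \<subseteq> V \<and> card B = 2}" using assms unfolding graph_def by auto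
  have fin2: "finite {B. B \<subseteq> V \<and> card B = 2}" using finV by simp
  show "finite E" using sub fin2 finite_subset by auto
  have "card E \<le> card {B. B \<subseteq> V \<and> card B = 2}" using sub fin2 by (rule card_mono[rotated])
  also have "\<dots> = card V choose 2" by (rule n_subsets[OF finV])
  also have "\<dots> \<le> card V ^ 2"
  proof (cases "2 \<le> card V")
    case True then show ?thesis by (rule binomial_le_pow)
  next
    case False then show ?thesis by (simp add: binomial_eq_0)
  qed
  finally show "card E \<le> card V ^ 2" .
qed



lemma exponent_ineq:
  fixes L l K s eps u :: real
  assumes "L \<ge> 1" "0 \<le> l" "l \<le> L" "K \<ge> 1" "s / K \<ge> 10^5 * L^3" "0 < eps" "eps < 1" "u \<ge> 1"
  defines "a \<equiv> eps * s / (10^4 * K * L^2) * u"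
  shows "a + a * (2 * l) - (s * u - a) / K \<le> - (6 * l * u)"
proof -
  define \<sigma> where "\<sigma> = s / K"
  have s: "s = \<sigma> * K" unfolding \<sigma>_def using assms(4) by simp
  have \<sigma>: "\<sigma> \<ge> 10^5 * L^3" using assms(5) unfolding \<sigma>_def .
  have L3: "L^3 \<ge> 1" using assms(1) by simp
  have "(10::real)^5 * L^3 \<ge> 1" using L3 by simp
  then have \<sigma>0: "\<sigma> > 0" using \<sigma> by linarith
  have a: "a = eps * \<sigma> / (10^4 * L^2) * u" unfolding a_def s using assms(4) by (simp add: field_simps)
  have a0: "a \<ge> 0" unfolding a using assms \<sigma>0 by simp
  have "a \<le> \<sigma> / (10^4 * L^2) * u"
    unfolding a using assms \<sigma>0 by (intro mult_right_mono divide_right_mono) auto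
  then have a1: "a * (2 + 2 * l) \<le> \<sigma> / (10^4 * L^2) * u * (2 + 2 * L)"
    using assms a0 by (intro mult_mono) auto
  have "(2 + 2 * L) / (10^4 * L^2) \<le> 1/2"
  proof -
    have "2 + 2 * L \<le> 4 * L" using assms(1) by simp
    also have "\<dots> \<le> 10^4 * L^2 / 2" using assms(1) by (simp add: power2_eq_square)
    finally show ?thesis using assms(1) by (simp add: field_simps)
  qed
  then have "\<sigma> / (10^4 * L^2) * u * (2 + 2 * L) \<le> \<sigma> * u / 2"
  proof -
    have "\<sigma> / (10^4 * L^2) * u * (2 + 2 * L) = (\<sigma> * u) * ((2 + 2 * L) / (10^4 * L^2))" by simp
    also have "\<dots> \<le> (\<sigma> * u) * (1/2)" using \<sigma>0 assms(8) \<open>(2 + 2 * L) / (10^4 * L^2) \<le> 1/2\<close>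
      by (intro mult_left_mono) auto
    finally show ?thesis by simp
  qed
  with a1 have a2: "a * (2 + 2 * l) \<le> \<sigma> * u / 2" by linarith
  have "(s * u - a) / K = \<sigma> * u - a / K" unfolding s using assms(4) by (simp add: field_simps)
  moreover have "a / K \<le> a" using a0 assms(4) by (simp add: divide_le_eq mult_le_cancel_left1)
  ultimately have "a + a * (2 * l) - (s * u - a) / K \<le> a * (2 + 2 * l) - \<sigma> * u"
    by (simp add: algebra_simps)
  also have "\<dots> \<le> - (\<sigma> * u / 2)" using a2 by simp
  also have "\<dots> \<le> - (6 * l * u)"
  proof -
    have "L \<le> L^3" using power_increasing[of 1 3 L] assms(1) by simp
    then have "6 * l \<le> 6 * L^3" using assms(3) by simp
    also have "\<dots> \<le> \<sigma> / 2" using \<sigma> L3 by simp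
    finally show ?thesis using assms(8) by (simp add: mult_right_mono)
  qed
  finally show ?thesis .
qed



lemma sum_product3:
  fixes f :: "nat \<Rightarrow> real" and g h :: "'a set \<Rightarrow> real"
  assumes "finite I" "finite P" "finite Q"
  shows "(\<Sum>(i,U,W)\<in>I \<times> P \<times> Q. f i * g U * h W) = sum f I * sum g P * sum h Q"
proof -
  have "(\<Sum>(i,U,W)\<in>I \<times> P \<times> Q. f i * g U * h W) = (\<Sum>i\<in>I. \<Sum>(U,W)\<in>P \<times> Q. f i * g U * h W)"
    by (subst sum.cartesian_product) (simp add: case_prod_beta)
  also have "\<dots> = (\<Sum>i\<in>I. \<Sum>U\<in>P. \<Sum>W\<in>Q. f i * g U * h W)"
    by (subst sum.cartesian_product) (simp add: case_prod_beta)
  also have "\<dots> = (\<Sum>i\<in>I. f i * (\<Sum>U\<in>P. g U * (\<Sum>W\<in>Q. h W)))"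
    by (simp add: sum_distrib_left mult.assoc)
  also have "\<dots> = sum f I * sum g P * sum h Q"
    by (simp add: sum_distrib_right mult.assoc)
  finally show ?thesis .
qed

theorem mainTheorem16:
  "\<exists>N0 S0::real. \<forall>(V::'a set) E (k::nat) (eps::real) (s::real).
     graph V E \<longrightarrow> real (card V) \<ge> N0 \<longrightarrow> s \<ge> S0 \<longrightarrow> k \<ge> 1 \<longrightarrow>
     0 < eps \<longrightarrow> eps < 1 \<longrightarrow> expander V E eps s \<longrightarrow>
     eps * s / real k \<ge> 10^5 * (log 2 (real (card V)))^3 \<longrightarrow>
     (\<exists>Es :: nat \<Rightarrow> 'a set set.
        disjoint_family_on Es {1..k} \<and>
        E = (\<Union>i\<in>{1..k}. Es i) \<and>
        (\<forall>i\<in>{1..k}. graph V (Es i) \<and>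
           expander V (Es i) (eps / 4) (eps * s / (10^4 * real k * (log 2 (real (card V)))^2))))"
proof (intro exI[of _ "16::real"] allI impI)
  fix V :: "'a set" and E :: "'a set set" and k :: nat and eps s :: real
  assume G: "graph V E" and N: "real (card V) \<ge> 16" and "s \<ge> 16" and k1: "k \<ge> 1"
    and e0: "0 < eps" and e1: "eps < 1" and X: "expander V E eps s"
    and hyp: "eps * s / real k \<ge> 10^5 * (log 2 (real (card V)))^3"
  define n where "n = card V"
  define L where "L = log 2 (real n)"
  define l where "l = ln (real n)"
  define s' where "s' = eps * s / (10^4 * real k * L^2)"
  have finV: "finite V" using G unfolding graph_def by auto
  have finE: "finite E" using graph_card_E[OF G] by simp
  have n16: "real n \<ge> 16" using N unfolding n_def .
  have L4: "L \<ge> 4"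
  proof -
    have "log 2 16 \<le> log 2 (real n)" using n16 by simp
    moreover have "log 2 (16::real) = 4"
    proof -
      have "log 2 ((2::real) ^ 4) = 4" using log_pow_cancel[of "2::real" 4] by simp
      then show ?thesis by simp
    qed
    ultimately show ?thesis unfolding L_def by simp
  qed
  show "\<exists>Es :: nat \<Rightarrow> 'a set set.
        disjoint_family_on Es {1..k} \<and>
        E = (\<Union>i\<in>{1..k}. Es i) \<and>
        (\<forall>i\<in>{1..k}. graph V (Es i) \<and>
           expander V (Es i) (eps / 4) (eps * s / (10^4 * real k * (log 2 (real (card V)))^2)))"
  proof -
  have n0: "real n > 0" using n16 by linarith
  have lL: "l = L * ln 2" unfolding l_def L_def log_def by simp
  have l0: "l \<ge> 0" unfolding l_def using n16 by simp
  have lleL: "l \<le> L" unfolding lL using L4 ln_2_less_1 by (simp add: mult_left_le)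
  have kpos: "real k \<ge> 1" using k1 by simp
  have L3: "(10::real)^5 * L^3 > 0" using L4 by simp
  have s0: "s > 0"
  proof (rule ccontr)
    assume "\<not> s > 0"
    then have "eps * s / real k \<le> 0" using e0 kpos by (simp add: divide_nonpos_pos mult_nonneg_nonpos)
    then show False using hyp L3 unfolding L_def n_def by linarith
  qed
  have sk: "s / real k \<ge> 10^5 * L^3"
  proof -
    have "eps * s / real k \<le> s / real k" using e1 s0 kpos by (simp add: divide_right_mono)
    then show ?thesis using hyp unfolding L_def n_def by linarith
  qed
  have ksn: "real k < real n"
  proof -
    have "s < real n - 1" unfolding n_def
      by (rule s_lt_n[OF G X e0]) (use n16 L4 in \<open>auto simp: n_def L_def\<close>)
    moreover have "real k \<le> s"
    proof -
      have "L^3 \<ge> 1" using L4 by (simp add: one_le_power)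
      then have "(10::real)^5 * L^3 \<ge> 1" by simp
      then have "1 \<le> s / real k" using sk by linarith
      then show ?thesis using kpos by (simp add: field_simps)
    qed
    ultimately show ?thesis by linarith
  qed
  have s'0: "s' \<ge> 0" unfolding s'_def using e0 s0 kpos by simp
  have s's: "s' \<le> s"
  proof -
    have "1 \<le> 10^4 * real k * L^2" using kpos L4
      by (smt (verit) mult_le_cancel_left1 one_le_power)
    then have "s' \<le> eps * s" unfolding s'_def using e0 s0 by (simp add: divide_le_eq mult_le_cancel_left1 less_le_not_le)
    also have "\<dots> \<le> s" using e1 s0 by simp
    finally show ?thesis .
  qed
  define C where "C = PiE E (\<lambda>_. {1..k})"
  define Bad where "Bad = (\<lambda>(i::nat, U, W). {c\<in>C. real (card {e\<in>cross V E U W. c e = i}) \<le> s' * real (card U)})"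
  define I where "I = {(i,U,W). i \<in> {1..k} \<and> U \<subseteq> V \<and> 1 \<le> card U \<and> real (card U) \<le> 2/3 * real (card V)
     \<and> W \<subseteq> V - U \<and> real (card W) < eps / 4 * real (card U) / (log 2 (real (card V)))\<^sup>2}"
  define x where "x = 1 / real n ^ 3"
  have x0: "0 \<le> x" "x \<le> 1" unfolding x_def using n16 by auto
  have event: "real (card (Bad p)) \<le> real k ^ card E * x ^ card (fst (snd p)) * x ^ card (snd (snd p))"
    if p: "p \<in> I" for p
  proof -
    obtain i U W where pe: "p = (i, U, W)" by (cases p) auto
    have i: "i \<in> {1..k}" and U: "U \<subseteq> V" "1 \<le> card U" "real (card U) \<le> 2/3 * real (card V)"
      and W: "W \<subseteq> V - U" "real (card W) < eps / 4 * real (card U) / (log 2 (real (card V)))\<^sup>2"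
      using p unfolding pe I_def by auto
    define u where "u = card U"
    define m where "m = card (cross V E U W)"
    have u1: "real u \<ge> 1" using U unfolding u_def by simp
    have W2: "real (card W) < eps * real (card U) / (log 2 (real (card V)))\<^sup>2"
    proof -
      have "eps / 4 * real (card U) / (log 2 (real (card V)))\<^sup>2 \<le> eps * real (card U) / (log 2 (real (card V)))\<^sup>2"
        using e0 L4 unfolding L_def n_def by (intro divide_right_mono) auto
      then show ?thesis using W by linarith
    qed
    have msu: "real m > s * real u" unfolding m_def u_def
      by (rule expander_cross[OF G X U]) (use W W2 in auto)
    have crossE: "cross V E U W \<subseteq> E" unfolding cross_def by auto
    define a where "a = s' * real u"
    have a0: "a \<ge> 0" unfolding a_def using s'0 by simp
    have am: "a < real m"
    proof -
      have "a \<le> s * real u" unfolding a_def using s's u1 by (simp add: mult_right_mono)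
      then show ?thesis using msu by linarith
    qed
    define t where "t = nat \<lfloor>a\<rfloor>"
    have ta: "real t \<le> a" unfolding t_def using a0 by linarith
    have tm: "t < m" using ta am by linarith
    have mM: "real m \<le> real n ^ 2"
    proof -
      have "m \<le> card E" unfolding m_def using crossE finE by (rule card_mono[rotated])
      also have "card E \<le> n ^ 2" unfolding n_def by (rule graph_card_E[OF G])
      finally show ?thesis by (metis of_nat_le_iff of_nat_power)
    qed
    have "real (card (Bad p)) = real (card {c \<in> PiE E (\<lambda>_. {1..k}). real (card {e\<in>cross V E U W. c e = i}) \<le> a})"
      unfolding pe Bad_def C_def a_def u_def by simp
    also have "\<dots> \<le> (real t + 1) * real m ^ t * (1 - 1/real k) ^ (m - t) * real k ^ card E"
      unfolding t_def m_def by (rule count_bad[OF finE crossE i a0]) (use am m_def in simp)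
    also have "\<dots> \<le> exp (a + a * ln (real n ^ 2) - (s * real u - a)/real k) * real k ^ card E"
      by (intro mult_right_mono event_bound ta tm mM) (use msu k1 in auto)
    also have "ln (real n ^ 2) = 2 * l" unfolding l_def using n0 by (simp add: ln_realpow)
    also have "exp (a + a * (2 * l) - (s * real u - a)/real k) \<le> exp (- (6 * l * real u))"
    proof -
      have "a + a * (2 * l) - (s * real u - a)/real k \<le> - (6 * l * real u)"
        unfolding a_def s'_def
        by (rule exponent_ineq) (use L4 l0 lleL kpos sk e0 e1 u1 in auto)
      then show ?thesis by simp
    qed
    also have "exp (- (6 * l * real u)) = x ^ (2 * u)"
    proof -
      have "exp (- (6 * l * real u)) = exp (real (6 * u) * (- l))" by (simp add: algebra_simps)
      also have "\<dots> = exp (- l) ^ (6 * u)" by (rule exp_of_nat_mult)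
      also have "exp (- l) = 1 / real n" unfolding l_def using n0 by (simp add: exp_minus inverse_eq_divide)
      also have "(1 / real n) ^ (6 * u) = x ^ (2 * u)" unfolding x_def
        by (simp add: power_mult[symmetric] power_one_over mult.commute)
      finally show ?thesis .
    qed
    also have "x ^ (2 * u) \<le> x ^ card U * x ^ card W"
    proof -
      have "real (card W) \<le> real u"
      proof -
        have "eps / 4 * real (card U) / (log 2 (real (card V)))\<^sup>2 \<le> real (card U)"
        proof -
          have "(log 2 (real (card V)))\<^sup>2 \<ge> 1" using L4 unfolding L_def n_def
            by (smt (verit) one_le_power)
          moreover have "eps / 4 * real (card U) \<le> real (card U)"
          proof -
            have "eps / 4 \<le> 1" using e1 by simp
            then have "eps / 4 * real (card U) \<le> 1 * real (card U)" by (rule mult_right_mono) auto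
            then show ?thesis by simp
          qed
          moreover have "eps / 4 * real (card U) / (log 2 (real (card V)))\<^sup>2 \<le> eps / 4 * real (card U) / 1"
            using \<open>(log 2 (real (card V)))\<^sup>2 \<ge> 1\<close> e0 by (intro divide_left_mono) auto
          ultimately show ?thesis by simp
        qed
        then show ?thesis using W unfolding u_def by linarith
      qed
      then have "card U + card W \<le> 2 * u" unfolding u_def by simp
      then have "x ^ (2 * u) \<le> x ^ (card U + card W)" using x0 by (intro power_decreasing) auto
      then show ?thesis by (simp add: power_add)
    qed
    finally show ?thesis unfolding pe using x0 by (simp add: mult_ac mult_right_mono)
  qed
  define J where "J = {1..k} \<times> (Pow V - {{}}) \<times> Pow V"
  have IJ: "I \<subseteq> J" unfolding I_def J_def by auto
  have finJ: "finite J" unfolding J_def using finV by simp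
  have finI: "finite I" using IJ finJ finite_subset by auto
  define Y where "Y = (1 + x) ^ n"
  have sumJ: "(\<Sum>(i,U,W)\<in>J. real k ^ card E * x ^ card U * x ^ card W)
      = (real k * real k ^ card E) * (Y - 1) * Y"
  proof -
    have "(\<Sum>(i,U,W)\<in>J. real k ^ card E * x ^ card U * x ^ card W)
      = (\<Sum>i\<in>{1..k}. real k ^ card E) * (\<Sum>U\<in>Pow V - {{}}. x ^ card U) * (\<Sum>W\<in>Pow V. x ^ card W)"
      unfolding J_def by (rule sum_product3) (use finV in auto)
    also have "(\<Sum>W\<in>Pow V. x ^ card W) = Y" unfolding Y_def n_def by (rule sum_pow_card[OF finV])
    also have "(\<Sum>U\<in>Pow V - {{}}. x ^ card U) = Y - 1"
      using sum_pow_card[OF finV, of x] finV unfolding Y_def n_def by (simp add: sum_diff1)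
    finally show ?thesis by simp
  qed
  have Ybound: "real k * (Y - 1) * Y < 1"
  proof -
    have "1 + x \<le> exp x" by (simp add: add.commute exp_ge_add_one_self)
    then have "Y \<le> exp x ^ n" unfolding Y_def using x0 by (intro power_mono) auto
    also have "\<dots> = exp (real n * x)" by (simp add: exp_of_nat_mult)
    also have "real n * x = 1 / real n ^ 2" unfolding x_def using n0 by (simp add: power_eq_if)
    finally have Y1: "Y \<le> exp (1 / real n ^ 2)" .
    have "real n ^ 2 \<ge> 16 ^ 2" using n16 by (intro power_mono) auto
    then have "2 \<le> real n ^ 2" by simp
    then have y: "1 / real n ^ 2 \<le> 1/2" by (simp add: divide_le_eq)
    have "norm (exp (1 / real n ^ 2)) \<le> 1 + 2 * norm (1 / real n ^ 2)"
      by (rule exp_bound_lemma) (use y in simp)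
    then have "exp (1 / real n ^ 2) \<le> 1 + 2 / real n ^ 2" by simp
    with Y1 have Yb: "Y \<le> 1 + 2 / real n ^ 2" by simp
    have Y0: "Y \<ge> 1" unfolding Y_def using x0 by simp
    have "real k * (Y - 1) * Y \<le> real k * (2 / real n ^ 2) * 2"
    proof (intro mult_mono)
      show "Y - 1 \<le> 2 / real n ^ 2" using Yb by simp
      show "Y \<le> 2" using Yb y by simp
    qed (use Y0 kpos in auto)
    also have "\<dots> = 4 * real k / real n ^ 2" by simp
    also have "\<dots> < 4 * real n / real n ^ 2" using ksn n0 by (intro divide_strict_right_mono) auto
    also have "\<dots> = 4 / real n" using n0 by (simp add: power2_eq_square)
    also have "\<dots> \<le> 1" using n16 by simp
    finally show ?thesis .
  qed
  have cardC: "card C = k ^ card E" unfolding C_def using finE by (simp add: card_PiE)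
  have finC: "finite C" unfolding C_def using finE by (simp add: finite_PiE)
  have "real (card (\<Union>p\<in>I. Bad p)) \<le> real (\<Sum>p\<in>I. card (Bad p))"
    by (intro of_nat_mono card_UN_le finI)
  also have "\<dots> = (\<Sum>p\<in>I. real (card (Bad p)))" by simp
  also have "\<dots> \<le> (\<Sum>p\<in>I. real k ^ card E * x ^ card (fst (snd p)) * x ^ card (snd (snd p)))"
    by (intro sum_mono event)
  also have "\<dots> \<le> (\<Sum>p\<in>J. real k ^ card E * x ^ card (fst (snd p)) * x ^ card (snd (snd p)))"
    using IJ finJ x0 by (intro sum_mono2) auto
  also have "\<dots> = (\<Sum>(i,U,W)\<in>J. real k ^ card E * x ^ card U * x ^ card W)"
    by (simp add: case_prod_beta)
  also have "\<dots> = real k ^ card E * (real k * (Y - 1) * Y)" unfolding sumJ by (simp add: mult_ac)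
  also have "\<dots> < real k ^ card E" using Ybound kpos by simp
  finally have "card (\<Union>p\<in>I. Bad p) < card C" unfolding cardC by (simp flip: of_nat_power)
  moreover have "(\<Union>p\<in>I. Bad p) \<subseteq> C" unfolding Bad_def by auto
  ultimately have "\<not> C \<subseteq> (\<Union>p\<in>I. Bad p)" using finC card_mono
    by (metis finite_subset subset_antisym less_irrefl)
  then obtain c where cC: "c \<in> C" and cB: "c \<notin> (\<Union>p\<in>I. Bad p)" by blast
  show ?thesis
  proof (intro exI[of _ "\<lambda>i. {e\<in>E. c e = i}"] conjI)
    show "disjoint_family_on (\<lambda>i. {e \<in> E. c e = i}) {1..k}"
      unfolding disjoint_family_on_def by auto
    show "E = (\<Union>i\<in>{1..k}. {e \<in> E. c e = i})"
      using cC unfolding C_def by (auto simp: PiE_iff)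
    show "\<forall>i\<in>{1..k}. graph V {e \<in> E. c e = i} \<and> expander V {e \<in> E. c e = i} (eps / 4) (eps * s / (10 ^ 4 * real k * (log 2 (real (card V)))\<^sup>2))"
    proof (intro ballI conjI)
    fix i assume i: "i \<in> {1..k}"
    show "graph V {e \<in> E. c e = i}" using G unfolding graph_def by auto
    show "expander V {e \<in> E. c e = i} (eps / 4) (eps * s / (10 ^ 4 * real k * (log 2 (real (card V)))\<^sup>2))"
    proof (rule color_expander[OF G refl])
      fix U W assume H: "U \<subseteq> V" "1 \<le> card U" "real (card U) \<le> 2/3 * real (card V)" "W \<subseteq> V - U"
        "real (card W) < eps / 4 * real (card U) / (log 2 (real (card V)))\<^sup>2"
      then have "(i, U, W) \<in> I" unfolding I_def using i by auto
      then have "c \<notin> Bad (i, U, W)" using cB by auto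
      then show "real (card {e \<in> cross V E U W. c e = i}) > eps * s / (10 ^ 4 * real k * (log 2 (real (card V)))\<^sup>2) * real (card U)"
        using cC unfolding Bad_def s'_def L_def n_def by auto
    qed
    qed
  qed
  qed
qed


end
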